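(* Let $\sigma$ be a positive finite Borel measure on $\partial\mathbb D$ with Poisson integral $u(z)=\int_{\partial\mathbb D}\frac{1-|z|^2}{|\xi-z|^2}d\sigma(\xi)$, and suppose there is $c>0$ with $\frac{\sigma(I)}{|I|}\ge c\,u(z_I)$ for every arc $I\subset\partial\mathbb D$. Then $\sigma$ is doubling: there is $C>0$ with $\sigma(2I)\le C\sigma(I)$ for every arc $I\subset\partial\mathbb D$.
   Context: $m$ is normalized Lebesgue measure on $\partial\mathbb D$, $|I|=m(I)$; $2I$ is the arc with the same center as $I$ and length $2|I|$ (the whole circle if $2|I|\ge1$); $z_I=(1-|I|)\xi_I$ with $\xi_I$ the center of $I$. *)

theory Defs
  imports "HOL-Analysis.Analysis"
begin

definition circ_m :: "complex measure" where
  "circ_m = distr (density lborel (\<lambda>x. ennreal (indicator {0..2*pi} x / (2*pi)))) borel cis"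

text \<open>Closed arc with center cis t and normalized length l (0 < l);
  for l \<ge> 1 it is the whole circle.\<close>
definition circ_arc :: "real \<Rightarrow> real \<Rightarrow> complex set" where
  "circ_arc t l = cis ` {t - pi * min l 1 .. t + pi * min l 1}"

definition poisson_int :: "complex measure \<Rightarrow> complex \<Rightarrow> real" where
  "poisson_int \<sigma> z = (\<integral>\<xi>. (1 - (cmod z)\<^sup>2) / (cmod (\<xi> - z))\<^sup>2 \<partial>\<sigma>)"

end

theory Submission
  imports Defs
begin
lemma chord: "cmod (cis x - cis y) \<le> \<bar>x - y\<bar>"
proof -
  have "(cmod (cis x - cis y))^2 = (cos x - cos y)^2 + (sin x - sin y)^2"
    by (simp add: cmod_def)
  also have "\<dots> = 2 - 2 * cos (x - y)"
    by (simp add: cos_diff power2_eq_square algebra_simps)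
  also have "cos (x - y) = cos (2 * ((x - y)/2))" by (simp only: mult_2 field_sum_of_halves)
  also have "\<dots> = 1 - 2 * (sin ((x - y)/2))^2"
    by (rule cos_double_sin)
  finally have "(cmod (cis x - cis y))^2 = (2 * sin ((x - y)/2))^2" by (simp add: power2_eq_square)
  hence "cmod (cis x - cis y) = \<bar>2 * sin ((x - y)/2)\<bar>" by (metis norm_ge_zero real_sqrt_abs real_sqrt_unique)
  also have "\<dots> \<le> 2 * \<bar>(x-y)/2\<bar>" using abs_sin_x_le_abs_x[of "(x-y)/2"] by simp
  finally show ?thesis by simp
qed

lemma m_eq:
  assumes "A \<in> sets borel"
  shows "measure circ_m A = measure lborel (cis -` A \<inter> {0..2*pi}) / (2*pi)"
proof -
  have cm: "cis \<in> borel_measurable borel" by (intro borel_measurable_continuous_onI continuous_intros)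
  hence B: "cis -` A \<in> sets borel" using assms measurable_sets_borel by blast
  have "emeasure circ_m A = emeasure (density lborel (\<lambda>x. ennreal (indicator {0..2*pi} x / (2*pi)))) (cis -` A)"
    unfolding circ_m_def using assms cm by (subst emeasure_distr) auto
  also have "\<dots> = (\<integral>\<^sup>+ x. ennreal (1/(2*pi)) * indicator (cis -` A \<inter> {0..2*pi}) x \<partial>lborel)"
    using B by (subst emeasure_density) (auto intro!: nn_integral_cong simp: indicator_def)
  also have "\<dots> = ennreal (1/(2*pi)) * emeasure lborel (cis -` A \<inter> {0..2*pi})"
    using B by (subst nn_integral_cmult_indicator) auto
  finally have e: "emeasure circ_m A = ennreal (1/(2*pi)) * emeasure lborel (cis -` A \<inter> {0..2*pi})" .
  have fin: "emeasure lborel (cis -` A \<inter> {0..2*pi}) < \<infinity>"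
    using emeasure_mono[of "cis -` A \<inter> {0..2*pi}" "{0..2*pi::real}" lborel] by (auto simp: less_top[symmetric] top_unique)
  show ?thesis unfolding measure_def e using fin
    by (simp add: enn2real_mult)
qed
lemma arc_borel: "circ_arc t l \<in> sets borel"
proof -
  have "compact (circ_arc t l)" unfolding circ_arc_def
    by (intro compact_continuous_image continuous_intros) auto
  thus ?thesis by (simp add: compact_imp_closed)
qed

lemma arc_bounds:
  assumes "0 < l" "l \<le> 1"
  shows "l / 2 \<le> measure circ_m (circ_arc t l) \<and> measure circ_m (circ_arc t l) \<le> 1"
proof -
  let ?S = "cis -` circ_arc t l \<inter> {0..2*pi}"
  have m: "measure circ_m (circ_arc t l) = measure lborel ?S / (2*pi)"
    using m_eq arc_borel by blast
  have Sb: "?S \<in> sets lborel"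
  proof -
    have "cis \<in> borel_measurable borel" by (intro borel_measurable_continuous_onI continuous_intros)
    thus ?thesis using arc_borel measurable_sets_borel by auto
  qed
  have "measure lborel ?S \<le> measure lborel {0..2*pi}"
    using Sb by (intro measure_mono_fmeasurable) (auto simp: fmeasurable_def)
  hence up: "measure lborel ?S \<le> 2*pi" by simp
  define t' where "t' = t - 2*pi * of_int \<lfloor>t/(2*pi)\<rfloor>"
  have fl: "of_int \<lfloor>t/(2*pi)\<rfloor> \<le> t/(2*pi)" "t/(2*pi) < of_int \<lfloor>t/(2*pi)\<rfloor> + 1"
    by linarith+
  have p2: "2*pi > 0" using pi_gt_zero by simp
  have "2*pi * of_int \<lfloor>t/(2*pi)\<rfloor> \<le> 2*pi * (t/(2*pi))"
    using mult_left_mono[OF fl(1), of "2*pi"] p2 by linarith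
  hence t'0: "0 \<le> t'" unfolding t'_def using p2 by simp
  have "2*pi * (t/(2*pi)) < 2*pi * (of_int \<lfloor>t/(2*pi)\<rfloor> + 1)"
    using mult_strict_left_mono[OF fl(2) p2] .
  hence t'1: "t' < 2*pi" unfolding t'_def using p2 by (simp add: algebra_simps)
  have ml: "min l 1 = l" using assms by simp
  have sub: "{u .. u + pi*l} \<subseteq> ?S" if "u \<in> {t', t' - pi*l}" "0 \<le> u" "u + pi*l \<le> 2*pi" for u
  proof
    fix x assume x: "x \<in> {u .. u + pi*l}"
    define k where "k = \<lfloor>t/(2*pi)\<rfloor>"
    have "cis x = cis (x + 2*pi * of_int k)"
      by (simp add: cis_mult[symmetric])
    moreover have "x + 2*pi * of_int k \<in> {t - pi*l .. t + pi*l}"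
      using that x assms unfolding t'_def k_def by auto
    ultimately have "cis x \<in> circ_arc t l" unfolding circ_arc_def ml
      by (metis image_eqI)
    thus "x \<in> ?S" using x that by auto
  qed
  have "\<exists>u. {u .. u + pi*l} \<subseteq> ?S"
  proof (cases "t' + pi*l \<le> 2*pi")
    case True thus ?thesis using sub[of t'] t'0 by blast
  next
    case False
    hence "pi*l \<le> t'" using assms t'1 pi_gt_zero
      by (smt (verit) mult_left_le)
    hence "{t' - pi*l .. t' - pi*l + pi*l} \<subseteq> ?S" using sub[of "t' - pi*l"] t'1 by auto
    thus ?thesis by blast
  qed
  then obtain u where u: "{u .. u + pi*l} \<subseteq> ?S" by blast
  have Sf: "?S \<in> fmeasurable lborel"
    by (rule fmeasurableI2[of "{0..2*pi}"]) (use Sb in \<open>auto simp: fmeasurable_def\<close>)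
  have "measure lborel {u .. u + pi*l} \<le> measure lborel ?S"
    by (rule measure_mono_fmeasurable[OF u]) (use Sf in auto)
  hence lo: "pi * l \<le> measure lborel ?S" using assms by simp
  show ?thesis unfolding m using lo up pi_gt_zero by (auto simp: field_simps)
qed

theorem mainTheorem16:
  fixes \<sigma> :: "complex measure" and c :: real
  assumes "sets \<sigma> = sets borel"
    and "finite_measure \<sigma>"
    and "emeasure \<sigma> (UNIV - sphere 0 1) = 0"
    and "c > 0"
    and "\<forall>t l. 0 < l \<and> l \<le> 1 \<longrightarrow>
           measure \<sigma> (circ_arc t l) / measure circ_m (circ_arc t l)
             \<ge> c * poisson_int \<sigma> (complex_of_real (1 - measure circ_m (circ_arc t l)) * cis t)"
  shows "\<exists>C>0. \<forall>t l. 0 < l \<and> l \<le> 1 \<longrightarrow>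
           measure \<sigma> (circ_arc t (2 * l)) \<le> C * measure \<sigma> (circ_arc t l)"
proof -
  interpret finite_measure \<sigma> by (rule assms(2))
  define K where "K = (4*pi+1)^2"
  have "4*pi+1 > 0" using pi_gt_zero by linarith
  hence Kpos: "K > 0" unfolding K_def by simp
  have sp: "space \<sigma> = UNIV" using sets_eq_imp_space_eq[OF assms(1)] by simp
  have AEs: "AE \<xi> in \<sigma>. \<xi> \<in> sphere 0 1"
  proof (rule AE_I')
    show "UNIV - sphere 0 1 \<in> null_sets \<sigma>"
      using assms(1,3) by (auto simp: null_sets_def)
  qed (auto simp: sp)
  have main: "measure \<sigma> (circ_arc t (2 * l)) \<le> (K / c) * measure \<sigma> (circ_arc t l)"
    if l: "0 < l" "l \<le> 1" for t l
  proof -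
    define a where "a = measure circ_m (circ_arc t l)"
    have a: "l/2 \<le> a" "a \<le> 1" using arc_bounds[OF l, of t] unfolding a_def by auto
    have apos: "a > 0" using a l by simp
    define z where "z = complex_of_real (1 - a) * cis t"
    have nz: "cmod z = 1 - a" unfolding z_def using a by (simp only: norm_mult norm_cis norm_of_real mult_1_right)
    define P where "P = (\<lambda>\<xi>. (1 - (cmod z)\<^sup>2) / (cmod (\<xi> - z))\<^sup>2)"
    define I2 where "I2 = circ_arc t (2 * l)"
    have num: "0 \<le> 1 - (cmod z)\<^sup>2" "1 - (cmod z)\<^sup>2 \<le> 1" "a \<le> 1 - (cmod z)\<^sup>2"
    proof -
      have b: "0 \<le> 1 - a" "1 - a \<le> 1" using a apos by auto
      have "(1-a)*(1-a) \<le> 1 - a" using mult_left_le_one_le[OF b(1) b(1) b(2)] by simp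
      moreover have "0 \<le> (1-a)*(1-a)" using b by simp
      ultimately have h1: "0 \<le> 1 - (1-a)*(1-a)" using apos by linarith
      have h2: "1 - (1-a)*(1-a) \<le> 1" using \<open>0 \<le> (1-a)*(1-a)\<close> by linarith
      have h3: "a \<le> 1 - (1-a)*(1-a)" using \<open>(1-a)*(1-a) \<le> 1 - a\<close> by linarith
      note h = h1 h2 h3
      show "0 \<le> 1 - (cmod z)\<^sup>2" using h(1) unfolding nz power2_eq_square .
      show "1 - (cmod z)\<^sup>2 \<le> 1" using h(2) unfolding nz power2_eq_square .
      show "a \<le> 1 - (cmod z)\<^sup>2" using h(3) unfolding nz power2_eq_square .
    qed
    have dist_lo: "a \<le> cmod (\<xi> - z)" if "\<xi> \<in> sphere 0 1" for \<xi>
    proof -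
      have "cmod \<xi> \<le> cmod (\<xi> - z) + cmod z" using norm_triangle_ineq[of "\<xi> - z" z] by simp
      thus ?thesis using that nz by simp
    qed
    have Pnn: "0 \<le> P \<xi>" for \<xi> unfolding P_def using num by simp
    have Pmeas: "P \<in> borel_measurable \<sigma>"
      unfolding measurable_cong_sets[OF assms(1) refl] unfolding P_def by measurable
    have Pint: "integrable \<sigma> P"
    proof (rule Bochner_Integration.integrable_bound[where f="\<lambda>_. 1 / a\<^sup>2"])
      show "integrable \<sigma> (\<lambda>_. 1 / a\<^sup>2)" by simp
      show "P \<in> borel_measurable \<sigma>" by (rule Pmeas)
      show "AE x in \<sigma>. norm (P x) \<le> norm (1 / a\<^sup>2)"
        using AEs
      proof eventually_elim
        case (elim x)
        have d: "a \<le> cmod (x - z)" using dist_lo[OF elim] .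
        have "P x \<le> 1 / (cmod (x - z))\<^sup>2" unfolding P_def
          using num d apos by (simp add: divide_right_mono)
        also have "\<dots> \<le> 1 / a\<^sup>2"
        proof -
          have dp: "0 < cmod (x - z)" using d apos by linarith
          show ?thesis using d apos dp
            by (intro divide_left_mono power_mono mult_pos_pos) auto
        qed
        finally show ?case using Pnn[of x] by simp
      qed
    qed
    have I2b: "I2 \<in> sets \<sigma>" unfolding I2_def using arc_borel assms(1) by simp
    have pw: "indicator I2 \<xi> * (1 / (K * a)) \<le> P \<xi>" for \<xi>
    proof (cases "\<xi> \<in> I2")
      case False thus ?thesis using Pnn by simp
    next
      case True
      then obtain x where x: "\<xi> = cis x" "x \<in> {t - pi * min (2*l) 1 .. t + pi * min (2*l) 1}"
        unfolding I2_def circ_arc_def by auto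
      have "pi * min (2*l) 1 \<le> pi * (2*l)" using pi_gt_zero by simp
      also have "\<dots> \<le> 4 * pi * a" using a pi_gt_zero by simp
      finally have e: "pi * min (2*l) 1 \<le> 4 * pi * a" .
      have xb: "t - pi * min (2*l) 1 \<le> x" "x \<le> t + pi * min (2*l) 1" using x(2) by auto
      have xt: "\<bar>x - t\<bar> \<le> 4*pi*a" unfolding abs_le_iff using xb e by linarith
      have "cis t - z = complex_of_real a * cis t" unfolding z_def by (simp add: algebra_simps)
      hence ctz: "cmod (cis t - z) = a" using apos by (simp add: norm_mult)
      have "cmod (\<xi> - z) \<le> cmod (cis x - cis t) + cmod (cis t - z)"
        unfolding x(1) by (metis diff_add_cancel norm_triangle_ineq add_diff_eq)
      also have "\<dots> \<le> (4*pi+1) * a" using chord[of x t] xt ctz by (simp add: algebra_simps)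
      finally have dup: "cmod (\<xi> - z) \<le> (4*pi+1) * a" .
      have sph: "\<xi> \<in> sphere 0 1" using x by simp
      have dlo: "a \<le> cmod (\<xi> - z)" using dist_lo[OF sph] .
      have "(cmod (\<xi> - z))\<^sup>2 \<le> K * a\<^sup>2" unfolding K_def
        using dup dlo apos by (metis power_mono power_mult_distrib norm_ge_zero)
      hence d2le: "(cmod (\<xi> - z))\<^sup>2 \<le> K * a\<^sup>2" .
      have "0 < cmod (\<xi> - z)" using dlo apos by linarith
      hence d2pos: "0 < (cmod (\<xi> - z))\<^sup>2" by simp
      have Ka: "0 < K * a" using Kpos apos by simp
      have "1 / (K * a) * (cmod (\<xi> - z))\<^sup>2 \<le> 1 / (K * a) * (K * a\<^sup>2)"
        using d2le Ka by (intro mult_left_mono) auto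
      also have "\<dots> = a" using Kpos apos by (simp add: power2_eq_square)
      finally have "1 / (K * a) \<le> a / (cmod (\<xi> - z))\<^sup>2"
        using d2pos by (simp add: le_divide_eq)
      also have "\<dots> \<le> P \<xi>" unfolding P_def using num by (simp add: divide_right_mono)
      finally show ?thesis using True by simp
    qed
    have "measure \<sigma> I2 * (1 / (K * a)) = (\<integral>\<xi>. indicator I2 \<xi> * (1 / (K * a)) \<partial>\<sigma>)"
      using I2b by simp
    also have "\<dots> \<le> (\<integral>\<xi>. P \<xi> \<partial>\<sigma>)"
    proof (rule integral_mono)
      have "integrable \<sigma> (indicator I2 :: complex \<Rightarrow> real)"
        using I2b by (intro integrable_real_indicator) (simp_all add: less_top[symmetric])
      thus "integrable \<sigma> (\<lambda>\<xi>. indicator I2 \<xi> * (1 / (K * a)))"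
        by (rule integrable_mult_left)
    qed (use pw Pint in auto)
    also have "\<dots> = poisson_int \<sigma> z" unfolding P_def poisson_int_def ..
    finally have lo: "measure \<sigma> I2 / (K * a) \<le> poisson_int \<sigma> z" by simp
    have hyp: "c * poisson_int \<sigma> z \<le> measure \<sigma> (circ_arc t l) / a"
      using assms(5) l unfolding z_def a_def by blast
    have "c * (measure \<sigma> I2 / (K * a)) \<le> measure \<sigma> (circ_arc t l) / a"
      using hyp lo assms(4) by (smt (verit) mult_left_mono)
    hence "c * measure \<sigma> I2 / K \<le> measure \<sigma> (circ_arc t l)"
      using apos Kpos by (simp add: field_simps)
    thus ?thesis unfolding I2_def using assms(4) Kpos by (simp add: field_simps)
  qed
  show ?thesis
    using main Kpos assms(4) by (intro exI[of _ "K / c"]) auto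
qed

end
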